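(* Let $f\colon\mathbb{R}^n\to\mathbb{R}$ be a strictly convex quadratic function, i.e. $f(x)=\tfrac12 x^TAx+b^Tx+c$ with $A$ symmetric positive definite, and let $x\in\mathbb{R}^n$ with $g=\nabla f(x)\neq 0$. For any initial symmetric positive definite matrix $H$, the procedure "while $f(x-Hg)\ge f(x)$, replace $H$ by its unit-step BFGS update at $x$" terminates after finitely many iterations.
   Context: For a $\mathcal{C}^1$-smooth convex $f\colon\mathbb{R}^n\to\mathbb{R}$, a point $x$ with $g=\nabla f(x)$, and a symmetric positive definite $H$, the unit-step BFGS update $H_+$ is: $s=-Hg$, $x_+=x+s$, $g_+=\nabla f(x_+)$, $y=g_+-g$, $V=I-\frac{sy^T}{s^Ty}$, $H_+=VHV^T+\frac{ss^T}{s^Ty}$ (defined when $s^Ty\ne0$, which holds automatically for strictly convex $f$ and $g\neq 0$). The point $x$ (and hence $g$) remains fixed during the procedure. *)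

theory Defs
  imports "HOL-Analysis.Analysis"
begin

definition outer_prod :: "real^'n \<Rightarrow> real^'n \<Rightarrow> real^'n^'n" where
  "outer_prod u v = (\<chi> i j. u $ i * v $ j)"

definition sym_pos_def :: "real^'n^'n \<Rightarrow> bool" where
  "sym_pos_def M \<longleftrightarrow> transpose M = M \<and> (\<forall>v. v \<noteq> 0 \<longrightarrow> 0 < v \<bullet> (M *v v))"

definition bfgs_update :: "(real^'n \<Rightarrow> real^'n) \<Rightarrow> real^'n \<Rightarrow> real^'n^'n \<Rightarrow> real^'n^'n" where
  "bfgs_update gradf x H =
    (let g = gradf x;
         s = - (H *v g);
         y = gradf (x + s) - g;
         V = mat 1 - (1 / (s \<bullet> y)) *\<^sub>R outer_prod s y
     in V ** H ** transpose V + (1 / (s \<bullet> y)) *\<^sub>R outer_prod s s)"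

end

theory Submission imports Defs begin

lemma outer_mulv: "outer_prod u v *v w = (v \<bullet> w) *\<^sub>R u"
  by (simp add: vec_eq_iff outer_prod_def matrix_vector_mult_def inner_vec_def sum_distrib_left mult_ac)

lemma outer_transpose: "transpose (outer_prod u v) = outer_prod v u"
  by (simp add: vec_eq_iff outer_prod_def transpose_def)

lemma mul_outer: "M ** outer_prod u v = outer_prod (M *v u) v"
  by (simp add: vec_eq_iff outer_prod_def matrix_matrix_mult_def matrix_vector_mult_def sum_distrib_left sum_distrib_right mult_ac)

lemma outer_mul: "outer_prod u v ** (M::real^'n^'n) = outer_prod u (transpose M *v v)"
  by (simp add: vec_eq_iff outer_prod_def matrix_matrix_mult_def matrix_vector_mult_def transpose_def sum_distrib_left mult_ac)

lemma trace_outer: "trace (outer_prod u v) = u \<bullet> v"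
  by (simp add: trace_def outer_prod_def inner_vec_def)

lemma trace_scaleR: "trace (c *\<^sub>R (M::real^'n^'n)) = c * trace M"
  by (simp add: trace_def sum_distrib_left)

lemma outer_outer: "outer_prod u v ** outer_prod w z = (v \<bullet> w) *\<^sub>R outer_prod u (z::real^'n)"
  unfolding outer_mul outer_transpose outer_mulv by (simp add: vec_eq_iff outer_prod_def inner_commute)

lemma sub_ldistrib: "(A::real^'n^'n) ** (B - C) = A ** B - A ** C"
  by (vector matrix_matrix_mult_def sum_subtractf[symmetric] field_simps)
lemma sub_rdistrib: "((B::real^'n^'n) - C) ** A = B ** A - C ** A"
  by (vector matrix_matrix_mult_def sum_subtractf[symmetric] field_simps)
lemma add_rdistrib: "((B::real^'n^'n) + C) ** A = B ** A + C ** A"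
  by (vector matrix_matrix_mult_def sum.distrib[symmetric] field_simps)

lemma transpose_diff: "transpose ((A::real^'n^'n) - B) = transpose A - transpose B"
  by (simp add: vec_eq_iff transpose_def)
lemma transpose_add: "transpose ((A::real^'n^'n) + B) = transpose A + transpose B"
  by (simp add: vec_eq_iff transpose_def)

lemma sym_inner: "transpose M = M \<Longrightarrow> u \<bullet> ((M::real^'n^'n) *v v) = v \<bullet> (M *v u)"
  by (metis dot_lmul_matrix inner_commute transpose_matrix_vector)

lemma tr_inner: "u \<bullet> ((M::real^'n^'n) *v v) = (transpose M *v u) \<bullet> v"
  by (metis dot_lmul_matrix transpose_matrix_vector)


lemma real_quad_zero:
  fixes a b :: real
  assumes "\<And>t. 0 \<le> a * t^2 + 2 * b * t" "0 \<le> a"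
  shows "b = 0"
proof -
  have c: "0 < a + 1" using assms(2) by simp
  define t where "t = -b/(a+1)"
  have ct: "(a+1) * t = -b" using c unfolding t_def by simp
  have "(a+1)^2 * (a * t^2 + 2*b*t) = a * ((a+1)*t)^2 + 2*b*(a+1)*((a+1)*t)"
    by (simp add: power2_eq_square algebra_simps)
  also have "\<dots> = - (b^2 * (a+2))" unfolding ct by (simp add: power2_eq_square algebra_simps)
  finally have eq: "(a+1)^2 * (a * t^2 + 2*b*t) = - (b^2 * (a+2))" .
  have "0 \<le> (a+1)^2 * (a * t^2 + 2*b*t)" using assms(1)[of t] by simp
  hence "b^2 * (a+2) \<le> 0" unfolding eq by simp
  with assms(2) have "b^2 \<le> 0" by (simp add: mult_le_0_iff)
  thus ?thesis by simp
qed

lemma real_cs: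
  fixes A B C :: real
  assumes "\<And>t. 0 \<le> A - 2 * t * B + t^2 * C" "0 < C"
  shows "B^2 \<le> A * C"
proof -
  have "0 \<le> A - 2 * (B/C) * B + (B/C)^2 * C" using assms(1) .
  hence "0 \<le> A - B^2 / C" using assms(2) by (simp add: power2_eq_square field_simps)
  thus ?thesis using assms(2) by (simp add: field_simps)
qed

lemma quad_expand:
  assumes "transpose M = M"
  shows "(u - t *\<^sub>R v) \<bullet> ((M::real^'n^'n) *v (u - t *\<^sub>R v)) =
     u \<bullet> (M *v u) - 2 * t * (u \<bullet> (M *v v)) + t^2 * (v \<bullet> (M *v v))"
  using sym_inner[OF assms, of v u]
  by (simp add: algebra_simps inner_diff_left inner_diff_right power2_eq_square matrix_vector_mult_diff_distrib matrix_vector_mult_scaleR)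

lemma psd_cs:
  assumes "transpose M = M" "\<And>w. 0 \<le> w \<bullet> ((M::real^'n^'n) *v w)" "0 < v \<bullet> (M *v v)"
  shows "(u \<bullet> (M *v v))^2 \<le> (u \<bullet> (M *v u)) * (v \<bullet> (M *v v))"
  apply (rule real_cs[OF _ assms(3)])
  using assms(2)[of "u - _ *\<^sub>R v"] quad_expand[OF assms(1)] by metis

lemma psd_zero_diag:
  assumes "transpose M = M" "\<And>w. 0 \<le> w \<bullet> ((M::real^'n^'n) *v w)" "v \<bullet> (M *v v) = 0"
  shows "M *v v = 0"
proof -
  let ?w = "M *v v"
  have "?w \<bullet> ?w = 0"
  proof (rule real_quad_zero)
    fix t :: real
    have "0 \<le> (v - (-t) *\<^sub>R ?w) \<bullet> (M *v (v - (-t) *\<^sub>R ?w))" by (rule assms(2))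
    also have "\<dots> = (?w \<bullet> (M *v ?w)) * t^2 + 2 * (?w \<bullet> ?w) * t"
      unfolding quad_expand[OF assms(1)] using assms(3) sym_inner[OF assms(1), of ?w v]
      by (simp add: algebra_simps)
    finally show "0 \<le> (?w \<bullet> (M *v ?w)) * t^2 + 2 * (?w \<bullet> ?w) * t" .
  qed (rule assms(2))
  thus ?thesis by simp
qed

lemma mulv_axis: "((M::real^'n^'n) *v axis j 1) $ i = M $ i $ j"
  by (simp add: matrix_vector_mult_def axis_def if_distrib if_distribR cong: if_cong)


lemma trace_psd_aux:
  fixes A :: "real^'n^'n"
  assumes Apsd: "\<And>w. 0 \<le> w \<bullet> (A *v w)"
  shows "finite S \<Longrightarrow> transpose M = M \<Longrightarrow> (\<forall>w. 0 \<le> w \<bullet> (M *v w)) \<Longrightarrow>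
     (\<forall>j. j \<notin> S \<longrightarrow> M *v axis j 1 = 0) \<Longrightarrow> 0 \<le> trace (A ** M)"
proof (induction S arbitrary: M rule: finite_induct)
  case empty
  have "M = 0"
    using empty(3) by (simp add: vec_eq_iff) (metis mulv_axis zero_index)
  thus ?case by (simp add: trace_def)
next
  case (insert k S M)
  let ?e = "axis k (1::real)"
  let ?d = "?e \<bullet> (M *v ?e)"
  let ?m = "M *v ?e"
  show ?case
  proof (cases "?d = 0")
    case True
    have "?m = 0" by (rule psd_zero_diag[OF insert(4)]) (use insert(5) True in auto)
    thus ?thesis using insert by (metis insertE)
  next
    case False
    hence dpos: "0 < ?d" using insert(5) by (metis order_le_less)
    define M' where "M' = M - (1/?d) *\<^sub>R outer_prod ?m ?m"
    have symM': "transpose M' = M'"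
      unfolding M'_def transpose_diff transpose_scalar outer_transpose insert(4) ..
    have M'v: "M' *v w = M *v w - ((?m \<bullet> w) / ?d) *\<^sub>R ?m" for w
      unfolding M'_def by (simp add: matrix_vector_mult_diff_rdistrib outer_mulv scaleR_matrix_vector_assoc[symmetric])
    have mw: "?m \<bullet> w = ?e \<bullet> (M *v w)" for w
      using sym_inner[OF insert(4), of ?e w] by (simp add: inner_commute)
    have psd': "\<forall>w. 0 \<le> w \<bullet> (M' *v w)"
    proof
      fix w
      have cs: "(?e \<bullet> (M *v w))^2 \<le> ?d * (w \<bullet> (M *v w))"
        proof -
        have "(w \<bullet> (M *v ?e))^2 \<le> (w \<bullet> (M *v w)) * ?d" using psd_cs[OF insert(4) _ dpos, of w] insert(5) by simp
        moreover have "w \<bullet> (M *v ?e) = ?e \<bullet> (M *v w)" by (rule sym_inner[OF insert(4)])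
        ultimately show ?thesis by (simp add: mult.commute)
      qed
      have "w \<bullet> (M' *v w) = w \<bullet> (M *v w) - (?e \<bullet> (M *v w))^2 / ?d"
      proof -
        have "w \<bullet> ?m = ?e \<bullet> (M *v w)" using mw[of w] by (simp add: inner_commute)
        thus ?thesis unfolding M'v inner_diff_right inner_scaleR_right mw
          by (simp add: power2_eq_square)
      qed
      also have "\<dots> \<ge> 0" using cs dpos by (simp add: field_simps)
      finally show "0 \<le> w \<bullet> (M' *v w)" .
    qed
    have zero': "\<forall>j. j \<notin> S \<longrightarrow> M' *v axis j 1 = 0"
    proof (intro allI impI)
      fix j assume j: "j \<notin> S"
      show "M' *v axis j 1 = 0"
      proof (cases "j = k")
        case True
        thus ?thesis unfolding M'v using False by (simp add: mw)
      next
        case False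
        hence z: "M *v axis j 1 = 0" using insert(6) j by auto
        have "?m \<bullet> axis j 1 = 0" unfolding mw z by simp
        thus ?thesis unfolding M'v z by simp
      qed
    qed
    have ih: "0 \<le> trace (A ** M')" using insert.IH[OF symM' psd' zero'] .
    have "trace (A ** M) = trace (A ** M') + (1/?d) * (?m \<bullet> (A *v ?m))"
      unfolding M'_def sub_ldistrib trace_sub matrix_scalar_ac scalar_matrix_assoc[symmetric] trace_scaleR mul_outer trace_outer
      by (simp add: inner_commute scaleR_matrix_vector_assoc[symmetric])
    also have "\<dots> \<ge> 0" using ih Apsd[of ?m] dpos by simp
    finally show ?thesis .
  qed
qed

lemma trace_psd:
  fixes A M :: "real^'n^'n"
  assumes "\<And>w. 0 \<le> w \<bullet> (A *v w)" "transpose M = M" "\<And>w. 0 \<le> w \<bullet> (M *v w)"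
  shows "0 \<le> trace (A ** M)"
  using trace_psd_aux[OF assms(1), of UNIV M] assms(2,3) by auto


lemma VtAV:
  fixes A :: "real^'n^'n"
  assumes "transpose A = A" "A *v s = p" "k * (s \<bullet> p) = 1"
  shows "transpose (mat 1 - k *\<^sub>R outer_prod s p) ** A ** (mat 1 - k *\<^sub>R outer_prod s p)
         = A - k *\<^sub>R outer_prod p p"
proof -
  have sA: "s \<bullet> (A *v w) = p \<bullet> w" for w
    using sym_inner[OF assms(1), of s w] assms(2) by (simp add: inner_commute)
  have Mv: "(mat 1 - k *\<^sub>R outer_prod s p) *v w = w - (k * (p \<bullet> w)) *\<^sub>R s" for w
    by (simp add: matrix_vector_mult_diff_rdistrib outer_mulv scaleR_matrix_vector_assoc[symmetric])
  have Mtv: "transpose (mat 1 - k *\<^sub>R outer_prod s p) *v w = w - (k * (s \<bullet> w)) *\<^sub>R p" for w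
    unfolding transpose_diff transpose_scalar outer_transpose transpose_mat
    by (simp add: matrix_vector_mult_diff_rdistrib outer_mulv scaleR_matrix_vector_assoc[symmetric])
  show ?thesis
  proof (subst matrix_eq, intro allI)
    fix v
    have "s \<bullet> (A *v v - (k * (p \<bullet> v)) *\<^sub>R p) = 0"
      using assms(3) by (simp add: inner_diff_right sA algebra_simps)
    hence "transpose (mat 1 - k *\<^sub>R outer_prod s p) *v (A *v v - (k * (p \<bullet> v)) *\<^sub>R p)
        = A *v v - (k * (p \<bullet> v)) *\<^sub>R p" unfolding Mtv by simp
    thus "(transpose (mat 1 - k *\<^sub>R outer_prod s p) ** A ** (mat 1 - k *\<^sub>R outer_prod s p)) *v v =
        (A - k *\<^sub>R outer_prod p p) *v v"
      unfolding matrix_vector_mul_assoc[symmetric] Mv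
      by (simp add: matrix_vector_mult_diff_distrib matrix_vector_mult_diff_rdistrib assms(2)
          outer_mulv scaleR_matrix_vector_assoc[symmetric] matrix_vector_mult_scaleR)
  qed
qed


lemma bfgs_step:
  fixes f :: "real^'n \<Rightarrow> real" and gradf :: "real^'n \<Rightarrow> real^'n"
    and A G :: "real^'n^'n" and b x :: "real^'n" and c :: real
  assumes A_spd: "sym_pos_def A"
    and f_quad: "\<And>z. f z = 1/2 * (z \<bullet> (A *v z)) + b \<bullet> z + c"
    and gr: "\<And>z. gradf z = A *v z + b"
    and g_nz: "gradf x \<noteq> 0"
    and G_spd: "sym_pos_def G"
    and fail: "f x \<le> f (x - G *v gradf x)"
  shows "sym_pos_def (bfgs_update gradf x G) \<and>
         trace (A ** bfgs_update gradf x G) \<le> trace (A ** G) - 1"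
proof -
  define g where "g = gradf x"
  define s where "s = - (G *v g)"
  define p where "p = A *v s"
  define \<sigma> where "\<sigma> = s \<bullet> p"
  define k where "k = 1 / \<sigma>"
  define V where "V = mat 1 - k *\<^sub>R outer_prod s p"
  have Asym: "transpose A = A" and Apd: "\<And>v. v \<noteq> 0 \<Longrightarrow> 0 < v \<bullet> (A *v v)"
    using A_spd unfolding sym_pos_def_def by auto
  have Gsym: "transpose G = G" and Gpd: "\<And>v. v \<noteq> 0 \<Longrightarrow> 0 < v \<bullet> (G *v v)"
    using G_spd unfolding sym_pos_def_def by auto
  have Gpsd: "0 \<le> v \<bullet> (G *v v)" for v using Gpd[of v] by (cases "v = 0") auto
  have gnz: "g \<noteq> 0" using g_nz g_def by simp
  define a where "a = g \<bullet> (G *v g)"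
  have apos: "0 < a" unfolding a_def using Gpd[OF gnz] .
  have snz: "s \<noteq> 0" using apos unfolding s_def a_def by auto
  have spos: "0 < \<sigma>" unfolding \<sigma>_def p_def using Apd[OF snz] .
  have y: "gradf (x + s) - g = p"
    unfolding g_def gr p_def by (simp add: matrix_vector_right_distrib)
  have U: "bfgs_update gradf x G = V ** G ** transpose V + k *\<^sub>R outer_prod s s"
    unfolding bfgs_update_def Let_def g_def[symmetric] s_def[symmetric] y
      k_def[symmetric] \<sigma>_def[symmetric] V_def[symmetric] ..
  have gs: "g \<bullet> s = - a" unfolding s_def a_def by simp
  have xAs: "x \<bullet> (A *v s) = s \<bullet> (A *v x)" by (rule sym_inner[OF Asym])
  have e1: "(x + s) \<bullet> (A *v (x + s)) = x \<bullet> (A *v x) + x \<bullet> (A *v s) + s \<bullet> (A *v x) + s \<bullet> (A *v s)"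
    by (simp add: matrix_vector_right_distrib inner_add_left inner_add_right)
  have e2: "(A *v x + b) \<bullet> s = s \<bullet> (A *v x) + b \<bullet> s"
    by (simp add: inner_add_left inner_commute[of b s] inner_commute[of "A *v x" s])
  have "f (x + s) = f x + (A *v x + b) \<bullet> s + \<sigma> / 2"
    unfolding f_quad \<sigma>_def p_def e1 e2 xAs inner_add_right by simp
  also have "(A *v x + b) = g" unfolding g_def gr ..
  finally have fs: "f (x + s) = f x - a + \<sigma> / 2" using gs by simp
  have "x - G *v gradf x = x + s" unfolding s_def g_def by simp
  with fail fs have sig2a: "2 * a \<le> \<sigma>" by simp
  define cc where "cc = p \<bullet> (G *v p)"
  have "(p \<bullet> (G *v g))^2 \<le> cc * a"
    unfolding cc_def a_def by (rule psd_cs[OF Gsym Gpsd]) (use apos a_def in simp)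
  moreover have "p \<bullet> (G *v g) = - \<sigma>" unfolding \<sigma>_def s_def by (simp add: inner_commute)
  ultimately have cs: "\<sigma> * \<sigma> \<le> cc * a" by (simp add: power2_eq_square)
  have "\<sigma> * (2 * a) \<le> \<sigma> * \<sigma>" using sig2a spos by (intro mult_left_mono) auto
  with cs have "(2 * \<sigma>) * a \<le> cc * a" by (simp add: algebra_simps)
  hence c2: "2 * \<sigma> \<le> cc" using apos by simp
  have tr1: "trace (A ** (V ** G ** transpose V)) = trace (A ** G) - k * cc"
  proof -
    have "trace (A ** (V ** G ** transpose V)) = trace ((A ** V ** G) ** transpose V)"
      by (simp only: matrix_mul_assoc)
    also have "\<dots> = trace (transpose V ** (A ** V ** G))"
      by (rule trace_mul_sym)
    also have "transpose V ** (A ** V ** G) = transpose V ** A ** V ** G"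
      by (simp only: matrix_mul_assoc)
    also have "transpose V ** A ** V = A - k *\<^sub>R outer_prod p p"
      unfolding V_def by (rule VtAV[OF Asym p_def[symmetric]]) (use spos k_def \<sigma>_def in simp)
    also have "trace ((A - k *\<^sub>R outer_prod p p) ** G) = trace (A ** G) - k * cc"
      unfolding sub_rdistrib trace_sub scalar_matrix_assoc[symmetric] trace_scaleR outer_mul trace_outer
        Gsym cc_def ..
    finally show ?thesis .
  qed
  have tr2: "trace (A ** (k *\<^sub>R outer_prod s s)) = 1"
    unfolding matrix_scalar_ac scalar_matrix_assoc[symmetric] trace_scaleR mul_outer trace_outer
    using spos unfolding k_def \<sigma>_def p_def by (simp add: inner_commute scaleR_matrix_vector_assoc[symmetric])
  have trU: "trace (A ** bfgs_update gradf x G) = trace (A ** G) - k * cc + 1"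
    unfolding U matrix_add_ldistrib trace_add tr1 tr2 ..
  have "k * cc \<ge> 2" using c2 spos unfolding k_def by (simp add: field_simps)
  hence trgoal: "trace (A ** bfgs_update gradf x G) \<le> trace (A ** G) - 1" unfolding trU by simp
  have symU: "transpose (bfgs_update gradf x G) = bfgs_update gradf x G"
  proof -
    have "transpose (V ** G ** transpose V) = V ** G ** transpose V"
      unfolding matrix_transpose_mul transpose_transpose Gsym by (rule matrix_mul_assoc)
    thus ?thesis unfolding U transpose_add transpose_scalar outer_transpose by simp
  qed
  have Vtv: "transpose V *v v = v - (k * (s \<bullet> v)) *\<^sub>R p" for v
    unfolding V_def transpose_diff transpose_scalar outer_transpose transpose_mat
    by (simp add: matrix_vector_mult_diff_rdistrib outer_mulv scaleR_matrix_vector_assoc[symmetric])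
  have quadU: "v \<bullet> (bfgs_update gradf x G *v v) =
      (transpose V *v v) \<bullet> (G *v (transpose V *v v)) + k * (s \<bullet> v)^2" for v
  proof -
    have "v \<bullet> ((V ** G ** transpose V) *v v) = (transpose V *v v) \<bullet> (G *v (transpose V *v v))"
      unfolding matrix_vector_mul_assoc[symmetric] tr_inner[of v V] ..
    moreover have "v \<bullet> ((k *\<^sub>R outer_prod s s) *v v) = k * (s \<bullet> v)^2"
      by (simp add: scaleR_matrix_vector_assoc[symmetric] outer_mulv power2_eq_square inner_commute)
    ultimately show ?thesis unfolding U by (simp add: matrix_vector_mult_add_rdistrib inner_add_right)
  qed
  have pdU: "\<forall>v. v \<noteq> 0 \<longrightarrow> 0 < v \<bullet> (bfgs_update gradf x G *v v)"
  proof (intro allI impI)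
    fix v :: "real^'n" assume vnz: "v \<noteq> 0"
    have kpos: "0 < k" using spos k_def by simp
    show "0 < v \<bullet> (bfgs_update gradf x G *v v)"
    proof (cases "s \<bullet> v = 0")
      case True
      hence "transpose V *v v = v" unfolding Vtv by simp
      thus ?thesis unfolding quadU using Gpd[OF vnz] True by simp
    next
      case False
      hence "0 < k * (s \<bullet> v)^2" using kpos by simp
      thus ?thesis unfolding quadU using Gpsd[of "transpose V *v v"] by simp
    qed
  qed
  show ?thesis using symU pdU trgoal unfolding sym_pos_def_def by simp
qed


lemma grad_formula:
  fixes f :: "real^'n \<Rightarrow> real" and gradf :: "real^'n \<Rightarrow> real^'n"
    and A :: "real^'n^'n" and b :: "real^'n" and c :: real
  assumes Asym: "transpose A = A"
    and f_quad: "\<And>z. f z = 1/2 * (z \<bullet> (A *v z)) + b \<bullet> z + c"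
    and grad: "\<And>z. (f has_derivative (\<lambda>h. gradf z \<bullet> h)) (at z)"
  shows "gradf z = A *v z + b"
proof -
  have fe: "f = (\<lambda>z. 1/2 * (z \<bullet> (A *v z)) + b \<bullet> z + c)" using f_quad by auto
  have "((\<lambda>z. 1/2 * (z \<bullet> (A *v z)) + b \<bullet> z + c) has_derivative
        (\<lambda>h. 1/2 * (h \<bullet> (A *v z) + z \<bullet> (A *v h)) + b \<bullet> h)) (at z)"
    by (auto intro!: derivative_eq_intros linear_imp_has_derivative simp: matrix_vector_mul_linear)
  moreover have "(\<lambda>h. 1/2 * (h \<bullet> (A *v z) + z \<bullet> (A *v h)) + b \<bullet> h) = (\<lambda>h. (A *v z + b) \<bullet> h)"
  proof
    fix h
    have "z \<bullet> (A *v h) = h \<bullet> (A *v z)" by (rule sym_inner[OF Asym])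
    thus "1/2 * (h \<bullet> (A *v z) + z \<bullet> (A *v h)) + b \<bullet> h = (A *v z + b) \<bullet> h"
      by (simp add: inner_add_left inner_add_right inner_commute[of b h] inner_commute[of h "A *v z"])
  qed
  ultimately have d: "(f has_derivative (\<lambda>h. (A *v z + b) \<bullet> h)) (at z)" unfolding fe by simp
  have "(\<lambda>h. gradf z \<bullet> h) = (\<lambda>h. (A *v z + b) \<bullet> h)"
    by (rule has_derivative_unique[OF grad d])
  hence "gradf z \<bullet> (gradf z - (A *v z + b)) = (A *v z + b) \<bullet> (gradf z - (A *v z + b))"
    by metis
  hence "(gradf z - (A *v z + b)) \<bullet> (gradf z - (A *v z + b)) = 0"
    by (simp add: inner_diff_left)
  thus ?thesis by simp
qed

theorem mainTheorem4:
  fixes f :: "real^'n \<Rightarrow> real" and gradf :: "real^'n \<Rightarrow> real^'n"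
    and A H :: "real^'n^'n" and b x :: "real^'n" and c :: real
  assumes A_spd: "sym_pos_def A"
    and f_quad: "\<And>z. f z = 1/2 * (z \<bullet> (A *v z)) + b \<bullet> z + c"
    and grad: "\<And>z. (f has_derivative (\<lambda>h. gradf z \<bullet> h)) (at z)"
    and g_nz: "gradf x \<noteq> 0"
    and H_spd: "sym_pos_def H"
  shows "\<exists>k. f (x - ((bfgs_update gradf x ^^ k) H) *v gradf x) < f x"
proof (rule ccontr)
  assume "\<not> ?thesis"
  hence fail: "\<And>k. f x \<le> f (x - ((bfgs_update gradf x ^^ k) H) *v gradf x)" by (simp add: not_less)
  have Asym: "transpose A = A" using A_spd unfolding sym_pos_def_def by auto
  have Apsd: "0 \<le> w \<bullet> (A *v w)" for w
    using A_spd unfolding sym_pos_def_def by (cases "w = 0") auto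
  have gr: "\<And>z. gradf z = A *v z + b" by (rule grad_formula[OF Asym f_quad grad])
  have ind: "sym_pos_def ((bfgs_update gradf x ^^ k) H) \<and>
      trace (A ** (bfgs_update gradf x ^^ k) H) \<le> trace (A ** H) - real k" for k
  proof (induction k)
    case 0
    then show ?case using H_spd by simp
  next
    case (Suc k)
    show ?case using bfgs_step[OF A_spd f_quad gr g_nz conjunct1[OF Suc.IH] fail[of k]] Suc.IH
      by auto
  qed
  define k where "k = nat (ceiling (trace (A ** H))) + 1"
  have "trace (A ** H) - real k < 0" unfolding k_def by linarith
  moreover have "0 \<le> trace (A ** (bfgs_update gradf x ^^ k) H)"
    using ind[of k] Apsd unfolding sym_pos_def_def
    by (intro trace_psd) (auto, metis order_le_less inner_zero_left matrix_vector_mult_0_right)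
  ultimately show False using ind[of k] by linarith
qed

end
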